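(* Let $S$ and $T$ be finite semigroups without zero and let $h\ge0$ be an integer. Suppose that every language (over any finite alphabet) recognised by a finite Rees zero-matrix semigroup over $S$ has generalised star-height at most $h$, and likewise every language recognised by a finite Rees zero-matrix semigroup over $T$ has generalised star-height at most $h$. Then every language recognised by a finite Rees zero-matrix semigroup over the direct product $S\times T$ has generalised star-height at most $h$.
   Context: For a semigroup $U$ without zero, non-empty sets $I,\Lambda$ and a $\Lambda\times I$ matrix $M=(m_{\lambda i})$ with entries in $U\cup\{\mathbf{0}\}$ ($\mathbf{0}$ a new symbol), the Rees zero-matrix semigroup over $U$, $M^{0}[U;I,\Lambda;M]$, is $(I\times U\times\Lambda)\cup\{\mathbf{0}\}$ with $(i,u,\lambda)(j,v,\mu)=(i,u\,m_{\lambda j}\,v,\mu)$ if $m_{\lambda j}\ne\mathbf{0}$, $=\mathbf{0}$ if $m_{\lambda j}=\mathbf{0}$, and $x\mathbf{0}=\mathbf{0}x=\mathbf{0}$; it is finite when $U$, $I$, $\Lambda$ are finite. A language $L\subseteq A^{+}$ over a finite alphabet $A$ is recognised by a semigroup $V$ if there is a semigroup morphism $\psi:A^{+}\to V$ and a subset $X\subseteq V$ with $L=X\psi^{-1}$. Generalised regular expressions over $A$: $\emptyset$, $\varepsilon$ and each letter are expressions; if $E,F$ are expressions so are $E\cup F$, $EF$, $E^{\ast}$, $E^{c}$ (complement in $A^{\ast}$). Star-height: $h(\emptyset)=h(\varepsilon)=h(a)=0$, $h(E\cup F)=h(EF)=\max\{h(E),h(F)\}$, $h(E^{\ast})=h(E)+1$,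 $h(E^{c})=h(E)$; the star-height of a language is the minimum of $h(E)$ over expressions $E$ representing it. *)

theory Defs
  imports Main
begin

definition is_semigroup :: "'a set \<Rightarrow> ('a \<Rightarrow> 'a \<Rightarrow> 'a) \<Rightarrow> bool" where
  "is_semigroup U f \<longleftrightarrow> U \<noteq> {} \<and> (\<forall>x\<in>U. \<forall>y\<in>U. f x y \<in> U) \<and>
     (\<forall>x\<in>U. \<forall>y\<in>U. \<forall>z\<in>U. f (f x y) z = f x (f y z))"

definition has_zero :: "'a set \<Rightarrow> ('a \<Rightarrow> 'a \<Rightarrow> 'a) \<Rightarrow> bool" where
  "has_zero U f \<longleftrightarrow> (\<exists>z\<in>U. \<forall>x\<in>U. f z x = z \<and> f x z = z)"

definition prod_mult :: "('a \<Rightarrow> 'a \<Rightarrow> 'a) \<Rightarrow> ('b \<Rightarrow> 'b \<Rightarrow> 'b) \<Rightarrow> ('a \<times> 'b) \<Rightarrow> ('a \<times> 'b) \<Rightarrow> ('a \<times> 'b)" where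
  "prod_mult f g x y = (f (fst x) (fst y), g (snd x) (snd y))"

text \<open>Index sets I, Lambda are sets of naturals; None is the adjoined zero;
  the sandwich matrix is M :: lambda => i => 'a option (None = zero entry).\<close>

definition rees_carrier :: "'a set \<Rightarrow> nat set \<Rightarrow> nat set \<Rightarrow> (nat \<times> 'a \<times> nat) option set" where
  "rees_carrier U I L = insert None (Some ` (I \<times> U \<times> L))"

definition rees_mult :: "('a \<Rightarrow> 'a \<Rightarrow> 'a) \<Rightarrow> (nat \<Rightarrow> nat \<Rightarrow> 'a option) \<Rightarrow>
    (nat \<times> 'a \<times> nat) option \<Rightarrow> (nat \<times> 'a \<times> nat) option \<Rightarrow> (nat \<times> 'a \<times> nat) option" where
  "rees_mult f M x y = (case x of None \<Rightarrow> None | Some (i, u, l) \<Rightarrow>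
      (case y of None \<Rightarrow> None | Some (j, v, m) \<Rightarrow>
        (case M l j of None \<Rightarrow> None | Some a \<Rightarrow> Some (i, f (f u a) v, m))))"

definition rees_matrix_ok :: "'a set \<Rightarrow> nat set \<Rightarrow> nat set \<Rightarrow> (nat \<Rightarrow> nat \<Rightarrow> 'a option) \<Rightarrow> bool" where
  "rees_matrix_ok U I L M \<longleftrightarrow> (\<forall>l\<in>L. \<forall>i\<in>I. \<forall>a. M l i = Some a \<longrightarrow> a \<in> U)"

definition plus_words :: "nat set \<Rightarrow> nat list set" where
  "plus_words A = {w. w \<noteq> [] \<and> set w \<subseteq> A}"

definition star_words :: "nat set \<Rightarrow> nat list set" where
  "star_words A = {w. set w \<subseteq> A}"

definition semigroup_morphism_free ::
    "nat set \<Rightarrow> 'v set \<Rightarrow> ('v \<Rightarrow> 'v \<Rightarrow> 'v) \<Rightarrow> (nat list \<Rightarrow> 'v) \<Rightarrow> bool" where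
  "semigroup_morphism_free A V f \<psi> \<longleftrightarrow>
     (\<forall>w\<in>plus_words A. \<psi> w \<in> V) \<and>
     (\<forall>u\<in>plus_words A. \<forall>v\<in>plus_words A. \<psi> (u @ v) = f (\<psi> u) (\<psi> v))"

definition recognises :: "'v set \<Rightarrow> ('v \<Rightarrow> 'v \<Rightarrow> 'v) \<Rightarrow> nat set \<Rightarrow> nat list set \<Rightarrow> bool" where
  "recognises V f A L \<longleftrightarrow>
     (\<exists>\<psi> X. semigroup_morphism_free A V f \<psi> \<and> X \<subseteq> V \<and>
        L = {w \<in> plus_words A. \<psi> w \<in> X})"

datatype gre = Empty | Eps | Letter nat | Union gre gre | Conc gre gre | Star gre | Compl gre

fun gre_over :: "nat set \<Rightarrow> gre \<Rightarrow> bool" where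
  "gre_over A Empty = True"
| "gre_over A Eps = True"
| "gre_over A (Letter a) = (a \<in> A)"
| "gre_over A (Union E F) = (gre_over A E \<and> gre_over A F)"
| "gre_over A (Conc E F) = (gre_over A E \<and> gre_over A F)"
| "gre_over A (Star E) = gre_over A E"
| "gre_over A (Compl E) = gre_over A E"

definition conc_lang :: "nat list set \<Rightarrow> nat list set \<Rightarrow> nat list set" where
  "conc_lang K L = {u @ v | u v. u \<in> K \<and> v \<in> L}"

definition star_lang :: "nat list set \<Rightarrow> nat list set" where
  "star_lang K = {concat ws | ws. \<forall>w\<in>set ws. w \<in> K}"

fun gre_lang :: "nat set \<Rightarrow> gre \<Rightarrow> nat list set" where
  "gre_lang A Empty = {}"
| "gre_lang A Eps = {[]}"
| "gre_lang A (Letter a) = {[a]}"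
| "gre_lang A (Union E F) = gre_lang A E \<union> gre_lang A F"
| "gre_lang A (Conc E F) = conc_lang (gre_lang A E) (gre_lang A F)"
| "gre_lang A (Star E) = star_lang (gre_lang A E)"
| "gre_lang A (Compl E) = star_words A - gre_lang A E"

fun gre_height :: "gre \<Rightarrow> nat" where
  "gre_height Empty = 0"
| "gre_height Eps = 0"
| "gre_height (Letter a) = 0"
| "gre_height (Union E F) = max (gre_height E) (gre_height F)"
| "gre_height (Conc E F) = max (gre_height E) (gre_height F)"
| "gre_height (Star E) = Suc (gre_height E)"
| "gre_height (Compl E) = gre_height E"

definition star_height_le :: "nat set \<Rightarrow> nat list set \<Rightarrow> nat \<Rightarrow> bool" where
  "star_height_le A L h \<longleftrightarrow> (\<exists>E. gre_over A E \<and> gre_lang A E = L \<and> gre_height E \<le> h)"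

definition rees_languages_sh_le :: "'a set \<Rightarrow> ('a \<Rightarrow> 'a \<Rightarrow> 'a) \<Rightarrow> nat \<Rightarrow> bool" where
  "rees_languages_sh_le U f h \<longleftrightarrow>
     (\<forall>I Lam M A L. finite I \<and> I \<noteq> {} \<and> finite Lam \<and> Lam \<noteq> {} \<and>
        rees_matrix_ok U I Lam M \<and> finite A \<and>
        recognises (rees_carrier U I Lam) (rees_mult f M) A L
        \<longrightarrow> star_height_le A L h)"

end

theory Submission
  imports Defs
begin

lemma gre_sub: "gre_over A E \<Longrightarrow> gre_lang A E \<subseteq> star_words A"
  by (induction E) (fastforce simp: conc_lang_def star_lang_def star_words_def subset_iff)+

lemma sh_union: "star_height_le A L1 h \<Longrightarrow> star_height_le A L2 h \<Longrightarrow> star_height_le A (L1 \<union> L2) h"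
  unfolding star_height_le_def
  by (metis gre_over.simps(4) gre_lang.simps(4) gre_height.simps(4) max.bounded_iff)

lemma sh_int: "star_height_le A L1 h \<Longrightarrow> star_height_le A L2 h \<Longrightarrow> star_height_le A (L1 \<inter> L2) h"
proof -
  assume a1: "star_height_le A L1 h" and a2: "star_height_le A L2 h"
  then obtain E1 E2 where e: "gre_over A E1" "gre_lang A E1 = L1" "gre_height E1 \<le> h"
    "gre_over A E2" "gre_lang A E2 = L2" "gre_height E2 \<le> h"
    unfolding star_height_le_def by blast
  have s1: "L1 \<subseteq> star_words A" "L2 \<subseteq> star_words A" using gre_sub e by blast+
  have "gre_lang A (Compl (Union (Compl E1) (Compl E2))) = L1 \<inter> L2"
    using s1 e by auto
  then show ?thesis unfolding star_height_le_def
    by (intro exI[of _ "Compl (Union (Compl E1) (Compl E2))"]) (use e in auto)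
qed

lemma sh_Union: "finite X \<Longrightarrow> (\<forall>x\<in>X. star_height_le A (F x) h) \<Longrightarrow> star_height_le A (\<Union>x\<in>X. F x) h"
proof (induction X rule: finite_induct)
  case empty
  then show ?case unfolding star_height_le_def by (intro exI[of _ Empty]) auto
next
  case (insert x F)
  then show ?case using sh_union by auto
qed

theorem theorem3p5:
  fixes S :: "'a set" and f :: "'a \<Rightarrow> 'a \<Rightarrow> 'a"
    and T :: "'b set" and g :: "'b \<Rightarrow> 'b \<Rightarrow> 'b"
    and h :: nat
  assumes "is_semigroup S f" and "finite S" and "\<not> has_zero S f"
    and "is_semigroup T g" and "finite T" and "\<not> has_zero T g"
    and H1: "rees_languages_sh_le S f h"
    and H2: "rees_languages_sh_le T g h"
  shows "rees_languages_sh_le (S \<times> T) (prod_mult f g) h"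
  unfolding rees_languages_sh_le_def
proof (intro allI impI, elim conjE)
  fix I Lam M A L
  assume fI: "finite I" "I \<noteq> {}" and fL: "finite Lam" "Lam \<noteq> {}"
    and ok: "rees_matrix_ok (S \<times> T) I Lam M" and fA: "finite A"
    and rec: "recognises (rees_carrier (S \<times> T) I Lam) (rees_mult (prod_mult f g) M) A L"
  obtain \<psi> X where mor: "semigroup_morphism_free A (rees_carrier (S \<times> T) I Lam) (rees_mult (prod_mult f g) M) \<psi>"
    and XV: "X \<subseteq> rees_carrier (S \<times> T) I Lam" and Ldef: "L = {w \<in> plus_words A. \<psi> w \<in> X}"
    using rec unfolding recognises_def by blast
  define M1 where "M1 = (\<lambda>l i. map_option fst (M l i))"
  define M2 where "M2 = (\<lambda>l i. map_option snd (M l i))"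
  define p1 :: "(nat \<times> ('a \<times> 'b) \<times> nat) option \<Rightarrow> (nat \<times> 'a \<times> nat) option"
    where "p1 = map_option (\<lambda>(i, st, l). (i, fst st, l))"
  define p2 :: "(nat \<times> ('a \<times> 'b) \<times> nat) option \<Rightarrow> (nat \<times> 'b \<times> nat) option"
    where "p2 = map_option (\<lambda>(i, st, l). (i, snd st, l))"
  have hom1: "p1 (rees_mult (prod_mult f g) M x y) = rees_mult f M1 (p1 x) (p1 y)" for x y
    unfolding p1_def M1_def rees_mult_def prod_mult_def
    by (cases x; cases y) (auto split: option.split)
  have hom2: "p2 (rees_mult (prod_mult f g) M x y) = rees_mult g M2 (p2 x) (p2 y)" for x y
    unfolding p2_def M2_def rees_mult_def prod_mult_def
    by (cases x; cases y) (auto split: option.split)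
  have inj: "p1 x = p1 y \<Longrightarrow> p2 x = p2 y \<Longrightarrow> x = y" for x y
    unfolding p1_def p2_def
    by (cases x; cases y) (auto simp: prod_eq_iff)
  have c1: "x \<in> rees_carrier (S \<times> T) I Lam \<Longrightarrow> p1 x \<in> rees_carrier S I Lam" for x
    unfolding p1_def rees_carrier_def by auto
  have c2: "x \<in> rees_carrier (S \<times> T) I Lam \<Longrightarrow> p2 x \<in> rees_carrier T I Lam" for x
    unfolding p2_def rees_carrier_def by auto
  have ok1: "rees_matrix_ok S I Lam M1" using ok unfolding rees_matrix_ok_def M1_def by force
  have ok2: "rees_matrix_ok T I Lam M2" using ok unfolding rees_matrix_ok_def M2_def by force
  have mor1: "semigroup_morphism_free A (rees_carrier S I Lam) (rees_mult f M1) (p1 \<circ> \<psi>)"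
    using mor c1 hom1 unfolding semigroup_morphism_free_def by auto
  have mor2: "semigroup_morphism_free A (rees_carrier T I Lam) (rees_mult g M2) (p2 \<circ> \<psi>)"
    using mor c2 hom2 unfolding semigroup_morphism_free_def by auto
  define L1 where "L1 x = {w \<in> plus_words A. (p1 \<circ> \<psi>) w \<in> {p1 x}}" for x
  define L2 where "L2 x = {w \<in> plus_words A. (p2 \<circ> \<psi>) w \<in> {p2 x}}" for x
  have eq: "L = (\<Union>x\<in>X. L1 x \<inter> L2 x)"
    unfolding Ldef L1_def L2_def using inj by auto
  have finC: "finite (rees_carrier (S \<times> T) I Lam)"
    unfolding rees_carrier_def using fI fL assms(2,5) by auto
  have finX: "finite X" using XV finC finite_subset by blast
  have "\<forall>x\<in>X. star_height_le A (L1 x \<inter> L2 x) h"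
  proof
    fix x assume xX: "x \<in> X"
    have r1: "recognises (rees_carrier S I Lam) (rees_mult f M1) A (L1 x)"
      unfolding recognises_def L1_def
      by (rule exI[of _ "p1 \<circ> \<psi>"], rule exI[of _ "{p1 x}"]) (use mor1 c1 xX XV in auto)
    have r2: "recognises (rees_carrier T I Lam) (rees_mult g M2) A (L2 x)"
      unfolding recognises_def L2_def
      by (rule exI[of _ "p2 \<circ> \<psi>"], rule exI[of _ "{p2 x}"]) (use mor2 c2 xX XV in auto)
    have "star_height_le A (L1 x) h" using H1 r1 fI fL ok1 fA unfolding rees_languages_sh_le_def by simp
    moreover have "star_height_le A (L2 x) h" using H2 r2 fI fL ok2 fA unfolding rees_languages_sh_le_def by simp
    ultimately show "star_height_le A (L1 x \<inter> L2 x) h" by (rule sh_int)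
  qed
  then show "star_height_le A L h" using eq sh_Union finX by simp
qed

end
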